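(* Let $N$ be a phylogenetic network on $X\subseteq[n]$ and let $i,j\in[n]$, $i\neq j$. Then $(i,j)$ is a cherry of $N$ if and only if $(i,j)$ is a cherry of the multiset $\boldsymbol\mu(N)$.
   Context: A (binary) phylogenetic network on a finite set $X\subseteq[n]=\{1,\dots,n\}$ is a directed acyclic graph $N=(V,A)$ without parallel arcs in which every node is exactly one of: the root (indegree 0, outdegree 1; there is exactly one), a leaf (indegree 1, outdegree 0), a tree node (indegree 1, outdegree 2), or a reticulation (indegree 2, outdegree 1); the leaves are identified with the elements of $X$. $V_T(N)$ denotes the set of leaves and tree nodes, $V_H(N)$ the set of reticulations. Paths are directed and trivial paths of length 0 are allowed; $m(u,v)$ denotes the number of directed paths from $u$ to $v$. Extended $\mu$-vectors: for $u\in V$ and $i\in[n]$, $\mu_i(u)=m(u,i)$ (which is $0$ if $i\notin X$), and $\mu_0(u)=\sum_{h\in V_H(N)} m(u,h)$; $\mu(u)=(\mu_0(u),\dots,\mu_n(u))$. The (extended) $\mu$-representation $\boldsymbol\mu(N)$ is the multiset $\{\mu(u)\mid u\in V_T(N)\}$, each vector counted with the number of nodes of $V_T(N)$ having it. For $S\subseteq\{0,\dots,n\}$, $\delta_S$ is the 0/1 indicator vector of $S$ indexed by $0,\dots,n$, and $\delta_{j_1,\dots,j_k}=\delta_{\{j_1,\dots,j_k\}}$. In a network, for distinct leaves $i,j$ with parents $p_i,p_j$, $(i,j)$ is a cherry of $N$ if $p_i=p_j$. For a finite multiset $\boldsymbol\mu$ of vectors of nonnegative integers indexed by $0,\dots,n$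 and distinct $i,j\in[n]$, $(i,j)$ is a cherry of $\boldsymbol\mu$ if $\delta_{i,j}$ belongs to $\boldsymbol\mu$ with multiplicity exactly $1$, and every element $\mu=(\mu_0,\dots,\mu_n)$ of $\boldsymbol\mu$ other than $\delta_i$ and $\delta_j$ satisfies $\mu_i=\mu_j$. *)

theory Defs
  imports Main "HOL-Library.Multiset"
begin

text \<open>Phylogenetic networks: a finite node set V of arbitrary type, an arc set A
(a set of pairs, so there are no parallel arcs), and a labelling lab of the leaves
by elements of X.\<close>

definition indeg :: "('v \<times> 'v) set \<Rightarrow> 'v \<Rightarrow> nat" where
  "indeg A v = card {u. (u, v) \<in> A}"

definition outdeg :: "('v \<times> 'v) set \<Rightarrow> 'v \<Rightarrow> nat" where
  "outdeg A v = card {w. (v, w) \<in> A}"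

definition leaves :: "'v set \<Rightarrow> ('v \<times> 'v) set \<Rightarrow> 'v set" where
  "leaves V A = {v \<in> V. indeg A v = 1 \<and> outdeg A v = 0}"

definition tree_nodes :: "'v set \<Rightarrow> ('v \<times> 'v) set \<Rightarrow> 'v set" where
  "tree_nodes V A = {v \<in> V. indeg A v = 1 \<and> outdeg A v = 2}"

definition reticulations :: "'v set \<Rightarrow> ('v \<times> 'v) set \<Rightarrow> 'v set" where
  "reticulations V A = {v \<in> V. indeg A v = 2 \<and> outdeg A v = 1}"

definition roots :: "'v set \<Rightarrow> ('v \<times> 'v) set \<Rightarrow> 'v set" where
  "roots V A = {v \<in> V. indeg A v = 0 \<and> outdeg A v = 1}"

definition VT :: "'v set \<Rightarrow> ('v \<times> 'v) set \<Rightarrow> 'v set" where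
  "VT V A = leaves V A \<union> tree_nodes V A"

definition phylo_net ::
  "'v set \<Rightarrow> ('v \<times> 'v) set \<Rightarrow> ('v \<Rightarrow> nat) \<Rightarrow> nat set \<Rightarrow> nat \<Rightarrow> bool" where
  "phylo_net V A lab X n \<longleftrightarrow>
     finite V \<and> A \<subseteq> V \<times> V \<and> acyclic A \<and>
     card (roots V A) = 1 \<and>
     (\<forall>v \<in> V. v \<in> roots V A \<or> v \<in> leaves V A \<or> v \<in> tree_nodes V A
                \<or> v \<in> reticulations V A) \<and>
     inj_on lab (leaves V A) \<and> lab ` leaves V A = X \<and> X \<subseteq> {1..n}"

text \<open>Directed paths from u to v (as vertex sequences; trivial path allowed).\<close>
definition dpaths :: "('v \<times> 'v) set \<Rightarrow> 'v \<Rightarrow> 'v \<Rightarrow> 'v list set" where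
  "dpaths A u v = {p. p \<noteq> [] \<and> hd p = u \<and> last p = v \<and>
                      (\<forall>k. Suc k < length p \<longrightarrow> (p ! k, p ! Suc k) \<in> A)}"

definition npaths :: "('v \<times> 'v) set \<Rightarrow> 'v \<Rightarrow> 'v \<Rightarrow> nat" where
  "npaths A u v = card (dpaths A u v)"

definition leaf_of :: "'v set \<Rightarrow> ('v \<times> 'v) set \<Rightarrow> ('v \<Rightarrow> nat) \<Rightarrow> nat \<Rightarrow> 'v" where
  "leaf_of V A lab i = (THE v. v \<in> leaves V A \<and> lab v = i)"

text \<open>Extended mu-vector of u, as a list of length n+1 indexed by 0..n.\<close>
definition mu_vec ::
  "'v set \<Rightarrow> ('v \<times> 'v) set \<Rightarrow> ('v \<Rightarrow> nat) \<Rightarrow> nat set \<Rightarrow> nat \<Rightarrow> 'v \<Rightarrow> nat list" where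
  "mu_vec V A lab X n u =
     map (\<lambda>k. if k = 0 then (\<Sum>h \<in> reticulations V A. npaths A u h)
               else if k \<in> X then npaths A u (leaf_of V A lab k) else 0) [0..<Suc n]"

definition mu_rep ::
  "'v set \<Rightarrow> ('v \<times> 'v) set \<Rightarrow> ('v \<Rightarrow> nat) \<Rightarrow> nat set \<Rightarrow> nat \<Rightarrow> nat list multiset" where
  "mu_rep V A lab X n = image_mset (mu_vec V A lab X n) (mset_set (VT V A))"

definition delta :: "nat \<Rightarrow> nat set \<Rightarrow> nat list" where
  "delta n S = map (\<lambda>k. if k \<in> S then 1 else 0) [0..<Suc n]"

definition net_cherry ::
  "'v set \<Rightarrow> ('v \<times> 'v) set \<Rightarrow> ('v \<Rightarrow> nat) \<Rightarrow> nat set \<Rightarrow> nat \<Rightarrow> nat \<Rightarrow> bool" where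
  "net_cherry V A lab X i j \<longleftrightarrow> i \<in> X \<and> j \<in> X \<and> i \<noteq> j \<and>
     (\<exists>p. (p, leaf_of V A lab i) \<in> A \<and> (p, leaf_of V A lab j) \<in> A)"

definition mset_cherry :: "nat \<Rightarrow> nat list multiset \<Rightarrow> nat \<Rightarrow> nat \<Rightarrow> bool" where
  "mset_cherry n M i j \<longleftrightarrow> i \<noteq> j \<and> count M (delta n {i, j}) = 1 \<and>
     (\<forall>m \<in># M. m \<noteq> delta n {i} \<and> m \<noteq> delta n {j} \<longrightarrow> m ! i = m ! j)"

end

theory Submission
  imports Defs
begin

lemma dpaths_single: "[u] \<in> dpaths A u u"
  by (simp add: dpaths_def)

lemma dpaths_hd: "p \<in> dpaths A u v \<Longrightarrow> p \<noteq> [] \<and> hd p = u"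
  by (simp add: dpaths_def)

lemma dpaths_Cons:
  assumes "(u, w) \<in> A" "q \<in> dpaths A w v"
  shows "u # q \<in> dpaths A u v"
  using assms unfolding dpaths_def
proof (clarsimp)
  fix k assume q: "q \<noteq> []" "w = hd q" "v = last q"
    "\<forall>k. Suc k < length q \<longrightarrow> (q ! k, q ! Suc k) \<in> A" "(u, hd q) \<in> A" "k < length q"
  show "((u # q) ! k, q ! k) \<in> A"
  proof (cases k)
    case 0 then show ?thesis using q by (simp add: hd_conv_nth)
  next
    case (Suc k') then show ?thesis using q by auto
  qed
qed

lemma dpaths_decomp:
  assumes "p \<in> dpaths A u v" "u \<noteq> v"
  shows "\<exists>w q. p = u # q \<and> (u, w) \<in> A \<and> q \<in> dpaths A w v"
proof -
  have ne: "p \<noteq> []" and h: "hd p = u" and l: "last p = v"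
    and e: "\<And>k. Suc k < length p \<Longrightarrow> (p ! k, p ! Suc k) \<in> A"
    using assms unfolding dpaths_def by auto
  obtain q where p: "p = u # q" using ne h by (cases p) auto
  have qne: "q \<noteq> []" using p l assms(2) by auto
  have e1: "(u, hd q) \<in> A" using e[of 0] p qne by (simp add: hd_conv_nth)
  have "\<forall>k. Suc k < length q \<longrightarrow> (q ! k, q ! Suc k) \<in> A"
  proof (intro allI impI)
    fix k assume "Suc k < length q"
    then show "(q ! k, q ! Suc k) \<in> A" using e[of "Suc k"] p by simp
  qed
  then have "q \<in> dpaths A (hd q) v" using qne p l unfolding dpaths_def by simp
  then show ?thesis using p e1 by blast
qed

lemma dpaths_snoc:
  assumes "q \<in> dpaths A u w" "(w, x) \<in> A"
  shows "q @ [x] \<in> dpaths A u x"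
  using assms unfolding dpaths_def
  apply (auto simp: nth_append last_conv_nth less_Suc_eq)
  subgoal for k by (subgoal_tac "k = length q - Suc 0") auto
  done

lemma dpaths_unsnoc:
  assumes "p \<in> dpaths A u v" "u \<noteq> v"
  shows "\<exists>w q. p = q @ [v] \<and> (w, v) \<in> A \<and> q \<in> dpaths A u w"
proof -
  have ne: "p \<noteq> []" and h: "hd p = u" and l: "last p = v"
    and e: "\<And>k. Suc k < length p \<Longrightarrow> (p ! k, p ! Suc k) \<in> A"
    using assms unfolding dpaths_def by auto
  define q where "q = butlast p"
  have p: "p = q @ [v]" using ne l q_def by (metis append_butlast_last_id)
  have qne: "q \<noteq> []" using p h assms(2) by (cases q) auto
  have "hd q = u" using p h qne by (cases q) auto
  moreover have "(last q, v) \<in> A"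
    using e[of "length q - 1"] p qne by (auto simp: nth_append last_conv_nth)
  moreover have "\<forall>k. Suc k < length q \<longrightarrow> (q ! k, q ! Suc k) \<in> A"
  proof (intro allI impI)
    fix k assume k: "Suc k < length q"
    then have "(p ! k, p ! Suc k) \<in> A" using e p by simp
    then show "(q ! k, q ! Suc k) \<in> A" using k p by (simp add: nth_append)
  qed
  ultimately have "q \<in> dpaths A u (last q)" "(last q, v) \<in> A" using qne unfolding dpaths_def by auto
  then show ?thesis using p by (intro exI[of _ "last q"] exI[of _ q] conjI)
qed

lemma dpaths_sink:
  assumes "\<And>w. (u, w) \<notin> A" "p \<in> dpaths A u v"
  shows "p = [u] \<and> v = u"
proof -
  have ne: "p \<noteq> []" and h: "hd p = u" and l: "last p = v"
    and e: "\<And>k. Suc k < length p \<Longrightarrow> (p ! k, p ! Suc k) \<in> A"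
    using assms unfolding dpaths_def by auto
  obtain q where p: "p = u # q" using ne h by (cases p) auto
  have "q = []"
  proof (rule ccontr)
    assume "q \<noteq> []"
    then have "(p ! 0, p ! Suc 0) \<in> A" using e[of 0] p by simp
    then show False using assms(1) p by simp
  qed
  then show ?thesis using p l by simp
qed

lemma dpaths_trancl:
  assumes "p \<in> dpaths A u v" "a < b" "b < length p"
  shows "(p ! a, p ! b) \<in> A\<^sup>+"
  using assms(2,3)
proof (induction b)
  case 0 then show ?case by simp
next
  case (Suc b)
  have e: "(p ! b, p ! Suc b) \<in> A" using assms(1) Suc.prems unfolding dpaths_def by auto
  show ?case
  proof (cases "a = b")
    case True then show ?thesis using e by auto
  next
    case False
    then have "a < b" using Suc.prems by simp
    then have "(p ! a, p ! b) \<in> A\<^sup>+" using Suc.IH Suc.prems by simp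
    then show ?thesis using e by (rule trancl_into_trancl)
  qed
qed

lemma dpaths_distinct:
  assumes "acyclic A" "p \<in> dpaths A u v"
  shows "distinct p"
proof -
  have "\<not> (a < b \<and> b < length p \<and> p ! a = p ! b)" for a b
    using dpaths_trancl[OF assms(2), of a b] assms(1) unfolding acyclic_def by auto
  then show ?thesis unfolding distinct_conv_nth by (metis linorder_neqE_nat)
qed

lemma dpaths_set:
  assumes "A \<subseteq> V \<times> V" "u \<in> V" "p \<in> dpaths A u v"
  shows "set p \<subseteq> V"
proof -
  have "k < length p \<Longrightarrow> p ! k \<in> V" for k
  proof (induction k)
    case 0 then show ?case using assms unfolding dpaths_def by (auto simp: hd_conv_nth)
  next
    case (Suc k)
    then have "(p ! k, p ! Suc k) \<in> A" using assms unfolding dpaths_def by auto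
    then show ?case using assms(1) by auto
  qed
  then show ?thesis by (auto simp: in_set_conv_nth)
qed

lemma dpaths_finite:
  assumes "finite V" "A \<subseteq> V \<times> V" "acyclic A" "u \<in> V"
  shows "finite (dpaths A u v)"
proof -
  have "dpaths A u v \<subseteq> {xs. set xs \<subseteq> V \<and> length xs \<le> card V}"
  proof
    fix p assume p: "p \<in> dpaths A u v"
    have "set p \<subseteq> V" using dpaths_set[OF assms(2,4) p] .
    moreover have "distinct p" using dpaths_distinct[OF assms(3) p] .
    then have "length p = card (set p)" by (simp add: distinct_card)
    moreover have "card (set p) \<le> card V" using card_mono[OF assms(1) \<open>set p \<subseteq> V\<close>] .
    ultimately show "p \<in> {xs. set xs \<subseteq> V \<and> length xs \<le> card V}" by simp
  qed
  then show ?thesis by (rule finite_subset[OF _ finite_lists_length_le[OF assms(1)]])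
qed

context
  fixes V :: "'v set" and A :: "('v \<times> 'v) set" and lab :: "'v \<Rightarrow> nat"
    and X :: "nat set" and n :: nat
  assumes net: "phylo_net V A lab X n"
begin

lemma netD: "finite V \<and> A \<subseteq> V \<times> V \<and> acyclic A \<and>
     card (roots V A) = 1 \<and>
     (\<forall>v \<in> V. v \<in> roots V A \<or> v \<in> leaves V A \<or> v \<in> tree_nodes V A
                \<or> v \<in> reticulations V A) \<and>
     inj_on lab (leaves V A) \<and> lab ` leaves V A = X \<and> X \<subseteq> {1..n}"
  using net unfolding phylo_net_def .

lemma finV: "finite V" using netD by (elim conjE)
lemma AV: "A \<subseteq> V \<times> V" using netD by (elim conjE)
lemma acyc: "acyclic A" using netD by (elim conjE)
lemma Xsub: "X \<subseteq> {1..n}" using netD by (elim conjE)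
lemma injl: "inj_on lab (leaves V A)" using netD by (elim conjE)
lemma labX: "lab ` leaves V A = X" using netD by (elim conjE)
lemma cls: "v \<in> V \<Longrightarrow> v \<in> roots V A \<or> v \<in> leaves V A \<or> v \<in> tree_nodes V A
                \<or> v \<in> reticulations V A" using netD by (elim conjE) blast

lemma succ_fin: "finite {w. (u, w) \<in> A}"
proof -
  have "{w. (u, w) \<in> A} \<subseteq> V" using AV by blast
  then show ?thesis using finV by (rule finite_subset)
qed

lemma pred_fin: "finite {w. (w, u) \<in> A}"
proof -
  have "{w. (w, u) \<in> A} \<subseteq> V" using AV by blast
  then show ?thesis using finV by (rule finite_subset)
qed

lemma leaf_nosucc: "l \<in> leaves V A \<Longrightarrow> (l, w) \<notin> A"
  using succ_fin[of l] unfolding leaves_def outdeg_def by auto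

lemma leaf_parent_unique:
  assumes "l \<in> leaves V A" "(a, l) \<in> A" "(b, l) \<in> A"
  shows "a = b"
proof -
  have "card {w. (w, l) \<in> A} = 1" using assms(1) unfolding leaves_def indeg_def by auto
  then obtain x where "{w. (w, l) \<in> A} = {x}" by (rule card_1_singletonE)
  moreover have "a \<in> {w. (w, l) \<in> A}" "b \<in> {w. (w, l) \<in> A}" using assms(2,3) by simp_all
  ultimately show ?thesis by simp
qed

lemma leaf_of_props:
  assumes "k \<in> X"
  shows "leaf_of V A lab k \<in> leaves V A \<and> lab (leaf_of V A lab k) = k"
proof -
  have "k \<in> lab ` leaves V A" using assms labX by simp
  then obtain l where l: "l \<in> leaves V A" "k = lab l" by (rule imageE)
  have uniq: "m = l" if m: "m \<in> leaves V A \<and> lab m = k" for m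
  proof -
    have "lab m = lab l" using m l by simp
    then show "m = l" using inj_onD[OF injl _ _ l(1)] m by blast
  qed
  have "leaf_of V A lab k = l" unfolding leaf_of_def
  proof (rule the_equality)
    show "l \<in> leaves V A \<and> lab l = k" using l by simp
  next
    fix m assume "m \<in> leaves V A \<and> lab m = k"
    then show "m = l" by (rule uniq)
  qed
  then show ?thesis using l by simp
qed

lemma leaf_of_lab:
  assumes l: "l \<in> leaves V A"
  shows "leaf_of V A lab (lab l) = l"
proof -
  have "lab l \<in> lab ` leaves V A" using l by (rule imageI)
  then have lX: "lab l \<in> X" using labX by simp
  have a: "leaf_of V A lab (lab l) \<in> leaves V A" "lab (leaf_of V A lab (lab l)) = lab l"
    using leaf_of_props[OF lX] by simp_all
  show ?thesis using inj_onD[OF injl a(2) a(1) l] .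
qed

lemma leaf_dpaths:
  assumes l: "l \<in> leaves V A"
  shows "dpaths A l v = (if v = l then {[l]} else {})"
proof -
  have ns: "\<And>w. (l, w) \<notin> A" using leaf_nosucc[OF l] .
  have sub: "p = [l] \<and> v = l" if "p \<in> dpaths A l v" for p
    using dpaths_sink[OF ns that] .
  show ?thesis
  proof (cases "v = l")
    case True
    have s1: "dpaths A l v \<subseteq> {[l]}" using sub by blast
    have "[l] \<in> dpaths A l l" by (rule dpaths_single)
    then have s2: "{[l]} \<subseteq> dpaths A l v" using True by simp
    have "dpaths A l v = {[l]}" using s1 s2 by (rule equalityI)
    then show ?thesis using True by simp
  next
    case False
    then have "dpaths A l v = {}" using sub by blast
    then show ?thesis using False by simp
  qed
qed

lemma npaths_pos:
  assumes "u \<in> V" "p \<in> dpaths A u v"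
  shows "npaths A u v \<ge> 1"
proof -
  have f: "finite (dpaths A u v)" using dpaths_finite[OF finV AV acyc assms(1)] .
  have "dpaths A u v \<noteq> {}" using assms(2) by blast
  then have "card (dpaths A u v) > 0" using f by (simp add: card_gt_0_iff)
  then show ?thesis unfolding npaths_def by simp
qed

lemma reach_leaf: "v \<in> V \<Longrightarrow> \<exists>l\<in>leaves V A. \<exists>q. q \<in> dpaths A v l"
proof -
  have fA: "finite A" using AV finV by (meson finite_SigmaI finite_subset)
  have wf: "wf (A\<inverse>)" using finite_acyclic_wf_converse[OF fA acyc] .
  show "v \<in> V \<Longrightarrow> ?thesis"
  proof (induction v rule: wf_induct[OF wf])
    case (1 x)
    show ?case
    proof (cases "\<exists>w. (x, w) \<in> A")
      case True
      then obtain w where w: "(x, w) \<in> A" by blast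
      then have "w \<in> V" using AV by auto
      then obtain l q where "l \<in> leaves V A" "q \<in> dpaths A w l" using 1 w by auto
      then show ?thesis using dpaths_Cons[OF w] by blast
    next
      case False
      then have "outdeg A x = 0" unfolding outdeg_def by simp
      then have "x \<in> leaves V A" using cls[OF 1(2)]
        unfolding roots_def tree_nodes_def reticulations_def by auto
      then show ?thesis using dpaths_single[of x A] by blast
    qed
  qed
qed

lemma mu_len: "length (mu_vec V A lab X n u) = Suc n"
  by (simp add: mu_vec_def)

lemma mu_nth: "k \<le> n \<Longrightarrow> mu_vec V A lab X n u ! k =
   (if k = 0 then (\<Sum>h \<in> reticulations V A. npaths A u h)
    else if k \<in> X then npaths A u (leaf_of V A lab k) else 0)"
  by (simp add: mu_vec_def del: upt_Suc)

lemma delta_nth: "k \<le> n \<Longrightarrow> delta n S ! k = (if k \<in> S then 1 else 0)"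
  by (simp add: delta_def del: upt_Suc)

lemma mu_eq_delta: "mu_vec V A lab X n u = delta n S \<longleftrightarrow>
   (\<forall>k\<le>n. mu_vec V A lab X n u ! k = (if k \<in> S then 1 else 0))"
  by (auto simp: list_eq_iff_nth_eq mu_len delta_def delta_nth simp del: upt_Suc)

lemma ret_fin: "finite (reticulations V A)"
  using finV unfolding reticulations_def by simp

lemma leaf_mu:
  assumes l: "l \<in> leaves V A"
  shows "mu_vec V A lab X n l = delta n {lab l}"
proof -
  have lX: "lab l \<in> X" using l labX by auto
  have "\<forall>k\<le>n. mu_vec V A lab X n l ! k = (if k \<in> {lab l} then 1 else 0)"
  proof (intro allI impI)
    fix k assume k: "k \<le> n"
    show "mu_vec V A lab X n l ! k = (if k \<in> {lab l} then 1 else 0)"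
    proof (cases "k = 0")
      case True
      have "\<And>h. h \<in> reticulations V A \<Longrightarrow> npaths A l h = 0"
        using l leaf_dpaths[OF l] unfolding npaths_def reticulations_def leaves_def by auto
      moreover have "lab l \<noteq> 0" using lX Xsub by auto
      ultimately show ?thesis using True k mu_nth by simp
    next
      case False
      show ?thesis
      proof (cases "k \<in> X")
        case True
        have "leaf_of V A lab k = l \<longleftrightarrow> k = lab l"
          using leaf_of_props[OF True] leaf_of_lab[OF l] by auto
        then show ?thesis using False True k mu_nth[OF k] leaf_dpaths[OF l]
          unfolding npaths_def by auto
      next
        case F2: False
        then show ?thesis using False k mu_nth[OF k] lX by auto
      qed
    qed
  qed
  then show ?thesis using mu_eq_delta by blast
qed


lemma core:
  assumes uVT: "u \<in> VT V A" and mu: "mu_vec V A lab X n u = delta n {i, j}"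
    and ij: "i \<in> {1..n}" "j \<in> {1..n}" "i \<noteq> j"
  shows "i \<in> X \<and> j \<in> X \<and> {w. (u, w) \<in> A} = {leaf_of V A lab i, leaf_of V A lab j}"
proof -
  define Li where "Li = leaf_of V A lab i"
  define Lj where "Lj = leaf_of V A lab j"
  have comp: "mu_vec V A lab X n u ! k = (if k \<in> {i,j} then 1 else 0)" if "k \<le> n" for k
    using mu delta_nth[OF that, of "{i,j}"] by simp
  have uV: "u \<in> V" using uVT unfolding VT_def leaves_def tree_nodes_def by blast
  have iX: "i \<in> X"
  proof (rule ccontr)
    assume "i \<notin> X"
    moreover have "i \<le> n" "i \<noteq> 0" using ij by auto
    ultimately show False using comp[of i] mu_nth[of i u] by simp
  qed
  have jX: "j \<in> X"
  proof (rule ccontr)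
    assume "j \<notin> X"
    moreover have "j \<le> n" "j \<noteq> 0" using ij by auto
    ultimately show False using comp[of j] mu_nth[of j u] by simp
  qed
  have cnt: "npaths A u (leaf_of V A lab k) = (if k \<in> {i,j} then 1 else 0)" if "k \<in> X" for k
  proof -
    have "k \<le> n" "k \<noteq> 0" using that Xsub by auto
    then show ?thesis using comp[of k] mu_nth[of k u] that by simp
  qed
  have ret0: False if "h \<in> reticulations V A" "q \<in> dpaths A u h" for h q
  proof -
    have "0 \<notin> {i, j}" using ij by auto
    then have "(\<Sum>h\<in>reticulations V A. npaths A u h) = 0" using comp[of 0] mu_nth[of 0 u] by simp
    then have "npaths A u h = 0" using ret_fin that(1) by simp
    moreover have "npaths A u h \<ge> 1" using npaths_pos[OF uV that(2)] .
    ultimately show False by simp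
  qed
  have Lprops: "Li \<in> leaves V A" "lab Li = i" "Lj \<in> leaves V A" "lab Lj = j"
    using leaf_of_props[OF iX] leaf_of_props[OF jX] unfolding Li_def Lj_def by simp_all
  have LiLj: "Li \<noteq> Lj" using Lprops ij by auto
  have leafreach: "(l = Li \<or> l = Lj) \<and> dpaths A u l = {q}"
    if lq: "l \<in> leaves V A" "q \<in> dpaths A u l" for l q
  proof -
    have "lab l \<in> lab ` leaves V A" using lq(1) by (rule imageI)
    then have lX: "lab l \<in> X" using labX by simp
    have ll: "leaf_of V A lab (lab l) = l" using leaf_of_lab[OF lq(1)] .
    have pos: "npaths A u l \<ge> 1" using npaths_pos[OF uV lq(2)] .
    have c: "npaths A u l = (if lab l \<in> {i,j} then 1 else 0)" using cnt[OF lX] ll by simp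
    have lij: "lab l \<in> {i,j}" using pos c by (cases "lab l \<in> {i,j}") auto
    have e1: "l = Li \<or> l = Lj" using lij ll unfolding Li_def Lj_def by auto
    have "card (dpaths A u l) = 1" using c lij unfolding npaths_def by simp
    then obtain x where "dpaths A u l = {x}" by (rule card_1_singletonE)
    then have "dpaths A u l = {q}" using lq(2) by simp
    then show ?thesis using e1 by simp
  qed
  have notleaf: "u \<notin> leaves V A"
  proof
    assume ul: "u \<in> leaves V A"
    have "npaths A u Li = 1" using cnt[OF iX] unfolding Li_def by simp
    then have "dpaths A u Li \<noteq> {}" unfolding npaths_def by (metis card.empty zero_neq_one)
    then have a: "Li = u" using leaf_dpaths[OF ul] by (auto split: if_splits)
    have "npaths A u Lj = 1" using cnt[OF jX] ij unfolding Lj_def by simp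
    then have "dpaths A u Lj \<noteq> {}" unfolding npaths_def by (metis card.empty zero_neq_one)
    then have b: "Lj = u" using leaf_dpaths[OF ul] by (auto split: if_splits)
    show False using a b LiLj by simp
  qed
  then have ut: "u \<in> tree_nodes V A" using uVT unfolding VT_def by blast
  then have "card {w. (u,w) \<in> A} = 2" unfolding tree_nodes_def outdeg_def by simp
  then obtain c1 c2 where cc: "{w. (u,w) \<in> A} = {c1,c2}" "c1 \<noteq> c2" unfolding card_2_iff by blast
  have "c1 \<in> {w. (u,w) \<in> A}" "c2 \<in> {w. (u,w) \<in> A}" using cc(1) by simp_all
  then have cA: "(u,c1) \<in> A" "(u,c2) \<in> A" by simp_all
  have child: "c \<in> leaves V A \<or> c \<in> tree_nodes V A" if cu: "(u,c) \<in> A" for c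
  proof -
    have cV: "c \<in> V" using cu AV by blast
    have p1: "[u,c] \<in> dpaths A u c" using dpaths_Cons[OF cu dpaths_single[of c A]] .
    have nr: "c \<notin> reticulations V A" using ret0 p1 by blast
    have "u \<in> {w. (w,c) \<in> A}" using cu by simp
    then have "{w. (w,c) \<in> A} \<noteq> {}" by blast
    then have "indeg A c \<noteq> 0" unfolding indeg_def using pred_fin[of c] by simp
    then have "c \<notin> roots V A" unfolding roots_def by simp
    then show ?thesis using cls[OF cV] nr by blast
  qed
  have isleaf: "c \<in> leaves V A" if c: "(u,c) \<in> A" and c': "(u,c') \<in> A" and ne: "c \<noteq> c'" for c c'
  proof (rule ccontr)
    assume "c \<notin> leaves V A"
    then have ct: "c \<in> tree_nodes V A" using child[OF c] by blast
    then have "card {w. (c,w) \<in> A} = 2" unfolding tree_nodes_def outdeg_def by simp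
    then obtain d1 d2 where dd: "{w. (c,w) \<in> A} = {d1,d2}" "d1 \<noteq> d2" unfolding card_2_iff by blast
    have "d1 \<in> {w. (c,w) \<in> A}" "d2 \<in> {w. (c,w) \<in> A}" using dd(1) by simp_all
    then have dA: "(c,d1) \<in> A" "(c,d2) \<in> A" by simp_all
    have dV: "d1 \<in> V" "d2 \<in> V" "c' \<in> V" using dA c' AV by blast+
    obtain l1 q1 where l1: "l1 \<in> leaves V A" "q1 \<in> dpaths A d1 l1" using reach_leaf[OF dV(1)] by blast
    obtain l2 q2 where l2: "l2 \<in> leaves V A" "q2 \<in> dpaths A d2 l2" using reach_leaf[OF dV(2)] by blast
    obtain l3 q3 where l3: "l3 \<in> leaves V A" "q3 \<in> dpaths A c' l3" using reach_leaf[OF dV(3)] by blast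
    have P1: "u # c # q1 \<in> dpaths A u l1" using dpaths_Cons[OF c dpaths_Cons[OF dA(1) l1(2)]] .
    have P2: "u # c # q2 \<in> dpaths A u l2" using dpaths_Cons[OF c dpaths_Cons[OF dA(2) l2(2)]] .
    have P3: "u # q3 \<in> dpaths A u l3" using dpaths_Cons[OF c' l3(2)] .
    have h1: "hd q1 = d1" using dpaths_hd[OF l1(2)] by simp
    have h2: "hd q2 = d2" using dpaths_hd[OF l2(2)] by simp
    have h3: "hd q3 = c'" using dpaths_hd[OF l3(2)] by simp
    have n12: "u # c # q1 \<noteq> u # c # q2" using h1 h2 dd(2) by auto
    have n13: "u # c # q1 \<noteq> u # q3" using h3 ne by auto
    have n23: "u # c # q2 \<noteq> u # q3" using h3 ne by auto
    have r1: "(l1 = Li \<or> l1 = Lj) \<and> dpaths A u l1 = {u # c # q1}" using leafreach[OF l1(1) P1] .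
    have r2: "(l2 = Li \<or> l2 = Lj) \<and> dpaths A u l2 = {u # c # q2}" using leafreach[OF l2(1) P2] .
    have r3: "(l3 = Li \<or> l3 = Lj) \<and> dpaths A u l3 = {u # q3}" using leafreach[OF l3(1) P3] .
    have e1: "l1 = Li \<or> l1 = Lj" using r1 by (rule conjunct1)
    have e2: "l2 = Li \<or> l2 = Lj" using r2 by (rule conjunct1)
    have e3: "l3 = Li \<or> l3 = Lj" using r3 by (rule conjunct1)
    have s1: "dpaths A u l1 = {u # c # q1}" using r1 by (rule conjunct2)
    have s2: "dpaths A u l2 = {u # c # q2}" using r2 by (rule conjunct2)
    have s3: "dpaths A u l3 = {u # q3}" using r3 by (rule conjunct2)
    have "l1 = l2 \<or> l1 = l3 \<or> l2 = l3" using e1 e2 e3 by (elim disjE) simp_all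
    moreover have "l1 \<noteq> l2"
    proof
      assume "l1 = l2"
      then have "{u # c # q1} = {u # c # q2}" using s1 s2 by simp
      then show False using n12 by simp
    qed
    moreover have "l1 \<noteq> l3"
    proof
      assume "l1 = l3"
      then have "{u # c # q1} = {u # q3}" using s1 s3 by simp
      then show False using n13 by simp
    qed
    moreover have "l2 \<noteq> l3"
    proof
      assume "l2 = l3"
      then have "{u # c # q2} = {u # q3}" using s2 s3 by simp
      then show False using n23 by simp
    qed
    ultimately show False by simp
  qed
  have c1l: "c1 \<in> leaves V A" using isleaf[OF cA(1) cA(2) cc(2)] .
  have c2l: "c2 \<in> leaves V A" using isleaf[OF cA(2) cA(1) not_sym[OF cc(2)]] .
  have f1: "c1 = Li \<or> c1 = Lj"
    using conjunct1[OF leafreach[OF c1l dpaths_Cons[OF cA(1) dpaths_single[of c1 A]]]] .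
  have f2: "c2 = Li \<or> c2 = Lj"
    using conjunct1[OF leafreach[OF c2l dpaths_Cons[OF cA(2) dpaths_single[of c2 A]]]] .
  have "{c1,c2} = {Li,Lj}" using f1 f2 cc(2) LiLj by (elim disjE) (simp_all add: insert_commute)
  then show ?thesis using iX jX cc(1) unfolding Li_def Lj_def by simp
qed


lemma VT_fin: "finite (VT V A)"
proof -
  have "VT V A \<subseteq> V" unfolding VT_def leaves_def tree_nodes_def by blast
  then show ?thesis using finV by (rule finite_subset)
qed

lemma parent_paths:
  assumes l: "l \<in> leaves V A" and pl: "(p, l) \<in> A" and ul: "u \<noteq> l"
  shows "npaths A u l = npaths A u p"
proof -
  have "dpaths A u l = (\<lambda>q. q @ [l]) ` dpaths A u p"
  proof (intro equalityI subsetI)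
    fix r assume r: "r \<in> dpaths A u l"
    obtain w q where wq: "r = q @ [l]" "(w, l) \<in> A" "q \<in> dpaths A u w"
      using dpaths_unsnoc[OF r ul] by blast
    have "w = p" using leaf_parent_unique[OF l wq(2) pl] .
    then have "q \<in> dpaths A u p" using wq(3) by simp
    then show "r \<in> (\<lambda>q. q @ [l]) ` dpaths A u p" using wq(1) by (rule rev_image_eqI)
  next
    fix r assume "r \<in> (\<lambda>q. q @ [l]) ` dpaths A u p"
    then obtain q where q: "r = q @ [l]" "q \<in> dpaths A u p" by (rule imageE)
    show "r \<in> dpaths A u l" using dpaths_snoc[OF q(2) pl] q(1) by simp
  qed
  moreover have "inj_on (\<lambda>q. q @ [l]) (dpaths A u p)" by (rule inj_onI) simp
  ultimately show ?thesis unfolding npaths_def by (simp add: card_image)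
qed

lemma main_ctx:
  assumes ij: "i \<in> {1..n}" "j \<in> {1..n}" "i \<noteq> j"
  shows "net_cherry V A lab X i j \<longleftrightarrow> mset_cherry n (mu_rep V A lab X n) i j"
proof
  assume nc: "net_cherry V A lab X i j"
  define Li where "Li = leaf_of V A lab i"
  define Lj where "Lj = leaf_of V A lab j"
  have iX: "i \<in> X" and jX: "j \<in> X" using nc unfolding net_cherry_def by simp_all
  obtain p where pA: "(p, Li) \<in> A" "(p, Lj) \<in> A" using nc unfolding net_cherry_def Li_def Lj_def by blast
  have Lprops: "Li \<in> leaves V A" "lab Li = i" "Lj \<in> leaves V A" "lab Lj = j"
    using leaf_of_props[OF iX] leaf_of_props[OF jX] unfolding Li_def Lj_def by simp_all
  have LiLj: "Li \<noteq> Lj" using Lprops ij by auto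
  have pV: "p \<in> V" using pA AV by blast
  have sup: "{Li, Lj} \<subseteq> {w. (p, w) \<in> A}" using pA by simp
  have c2: "card {Li, Lj} = 2" using LiLj by simp
  have "card {w. (p, w) \<in> A} \<ge> 2" using card_mono[OF succ_fin sup] c2 by simp
  then have "outdeg A p \<ge> 2" unfolding outdeg_def .
  then have pt: "p \<in> tree_nodes V A" using cls[OF pV]
    unfolding roots_def leaves_def reticulations_def by auto
  then have "outdeg A p = 2" unfolding tree_nodes_def by simp
  then have "card {Li, Lj} = card {w. (p, w) \<in> A}" using c2 unfolding outdeg_def by simp
  then have succ: "{Li, Lj} = {w. (p, w) \<in> A}" using card_subset_eq[OF succ_fin sup] by simp
  have pVT: "p \<in> VT V A" using pt unfolding VT_def by simp
  have psub: "q = [p, v] \<and> (v = Li \<or> v = Lj)" if q: "q \<in> dpaths A p v" and vp: "v \<noteq> p" for q v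
  proof -
    obtain w r where wr: "q = p # r" "(p, w) \<in> A" "r \<in> dpaths A w v"
      using dpaths_decomp[OF q not_sym[OF vp]] by blast
    have "w \<in> {w. (p, w) \<in> A}" using wr(2) by simp
    then have "w \<in> {Li, Lj}" using succ by simp
    then have w: "w = Li \<or> w = Lj" by simp
    then have wl: "w \<in> leaves V A" using Lprops by (elim disjE) simp_all
    have "r \<in> (if v = w then {[w]} else {})" using wr(3) leaf_dpaths[OF wl] by simp
    then have "r = [w] \<and> v = w" by (simp split: if_splits)
    then show ?thesis using wr(1) w by simp
  qed
  have np: "npaths A p v = (if v = Li \<or> v = Lj then 1 else 0)" if vp: "v \<noteq> p" for v
  proof (cases "v = Li \<or> v = Lj")
    case True
    then have pv: "(p, v) \<in> A" using pA by (elim disjE) simp_all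
    have pin: "[p, v] \<in> dpaths A p v" using dpaths_Cons[OF pv dpaths_single[of v A]] .
    have "dpaths A p v = {[p, v]}"
    proof (intro equalityI subsetI)
      fix q assume "q \<in> dpaths A p v"
      then show "q \<in> {[p, v]}" using psub[OF _ vp] by simp
    next
      fix q assume "q \<in> {[p, v]}"
      then show "q \<in> dpaths A p v" using pin by simp
    qed
    then show ?thesis using True unfolding npaths_def by simp
  next
    case False
    have "q \<notin> dpaths A p v" for q using psub[OF _ vp, of q] False by blast
    then have "dpaths A p v = {}" by blast
    then show ?thesis using False unfolding npaths_def by simp
  qed
  have mup: "mu_vec V A lab X n p = delta n {i, j}"
    unfolding mu_eq_delta
  proof (intro allI impI)
    fix k assume k: "k \<le> n"
    show "mu_vec V A lab X n p ! k = (if k \<in> {i, j} then 1 else 0)"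
    proof (cases "k = 0")
      case True
      have "npaths A p h = 0" if h: "h \<in> reticulations V A" for h
      proof -
        have "h \<noteq> p" using h pt unfolding reticulations_def tree_nodes_def by auto
        moreover have "h \<noteq> Li" "h \<noteq> Lj" using h Lprops unfolding reticulations_def leaves_def by auto
        ultimately show ?thesis using np by simp
      qed
      then have "(\<Sum>h\<in>reticulations V A. npaths A p h) = 0" by simp
      moreover have "0 \<notin> {i, j}" using ij by auto
      ultimately show ?thesis using True mu_nth[OF k, of p] by simp
    next
      case k0: False
      show ?thesis
      proof (cases "k \<in> X")
        case True
        have kl: "leaf_of V A lab k \<in> leaves V A" "lab (leaf_of V A lab k) = k"
          using leaf_of_props[OF True] by simp_all
        have "leaf_of V A lab k \<noteq> p" using kl(1) pt unfolding leaves_def tree_nodes_def by auto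
        then have e: "npaths A p (leaf_of V A lab k) =
            (if leaf_of V A lab k = Li \<or> leaf_of V A lab k = Lj then 1 else 0)" using np by simp
        have "(leaf_of V A lab k = Li \<or> leaf_of V A lab k = Lj) \<longleftrightarrow> k \<in> {i, j}"
        proof
          assume "leaf_of V A lab k = Li \<or> leaf_of V A lab k = Lj"
          then show "k \<in> {i, j}" using kl(2) Lprops by auto
        next
          assume "k \<in> {i, j}"
          then show "leaf_of V A lab k = Li \<or> leaf_of V A lab k = Lj" unfolding Li_def Lj_def by auto
        qed
        then show ?thesis using e mu_nth[OF k, of p] k0 True by simp
      next
        case False
        then have "k \<notin> {i, j}" using iX jX by auto
        then show ?thesis using False mu_nth[OF k, of p] k0 by simp
      qed
    qed
  qed
  have notin: "delta n {i, j} \<notin># image_mset (mu_vec V A lab X n) (mset_set (VT V A - {p}))"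
  proof
    assume "delta n {i, j} \<in># image_mset (mu_vec V A lab X n) (mset_set (VT V A - {p}))"
    then obtain u where u: "u \<in> VT V A - {p}" "delta n {i, j} = mu_vec V A lab X n u"
      using VT_fin by auto
    have "{w. (u, w) \<in> A} = {Li, Lj}" using core[of u i j] u ij unfolding Li_def Lj_def by simp
    then have "(u, Li) \<in> A" by blast
    then have "u = p" using leaf_parent_unique[OF Lprops(1) _ pA(1)] by blast
    then show False using u by simp
  qed
  have "mset_set (VT V A) = add_mset p (mset_set (VT V A - {p}))"
    using mset_set.remove[OF VT_fin pVT] .
  then have "mu_rep V A lab X n = add_mset (mu_vec V A lab X n p)
      (image_mset (mu_vec V A lab X n) (mset_set (VT V A - {p})))"
    unfolding mu_rep_def by simp
  then have cnt: "count (mu_rep V A lab X n) (delta n {i, j}) = 1"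
    using notin mup by (simp add: count_eq_zero_iff)
  have cond: "m ! i = m ! j" if m: "m \<in># mu_rep V A lab X n" "m \<noteq> delta n {i}" "m \<noteq> delta n {j}" for m
  proof -
    obtain u where u: "u \<in> VT V A" "m = mu_vec V A lab X n u"
      using m(1) VT_fin unfolding mu_rep_def by auto
    have ui: "u \<noteq> Li"
    proof
      assume "u = Li"
      then have "m = delta n {i}" using u(2) leaf_mu[OF Lprops(1)] Lprops(2) by simp
      then show False using m(2) by simp
    qed
    have uj: "u \<noteq> Lj"
    proof
      assume "u = Lj"
      then have "m = delta n {j}" using u(2) leaf_mu[OF Lprops(3)] Lprops(4) by simp
      then show False using m(3) by simp
    qed
    have "i \<le> n" "i \<noteq> 0" "j \<le> n" "j \<noteq> 0" using ij by auto
    then have "m ! i = npaths A u Li" "m ! j = npaths A u Lj"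
      using u(2) mu_nth[of i u] mu_nth[of j u] iX jX unfolding Li_def Lj_def by simp_all
    moreover have "npaths A u Li = npaths A u p" using parent_paths[OF Lprops(1) pA(1) ui] .
    moreover have "npaths A u Lj = npaths A u p" using parent_paths[OF Lprops(3) pA(2) uj] .
    ultimately show ?thesis by simp
  qed
  show "mset_cherry n (mu_rep V A lab X n) i j"
    unfolding mset_cherry_def using ij(3) cnt cond by blast
next
  assume mc: "mset_cherry n (mu_rep V A lab X n) i j"
  then have "count (mu_rep V A lab X n) (delta n {i, j}) = 1" unfolding mset_cherry_def by simp
  then have "delta n {i, j} \<in># mu_rep V A lab X n" by (metis count_greater_zero_iff zero_less_one)
  then obtain u where u: "u \<in> VT V A" "delta n {i, j} = mu_vec V A lab X n u"
    using VT_fin unfolding mu_rep_def by auto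
  have c: "i \<in> X \<and> j \<in> X \<and> {w. (u, w) \<in> A} = {leaf_of V A lab i, leaf_of V A lab j}"
    using core[OF u(1) u(2)[symmetric] ij] .
  then have "leaf_of V A lab i \<in> {w. (u, w) \<in> A}" "leaf_of V A lab j \<in> {w. (u, w) \<in> A}" by simp_all
  then show "net_cherry V A lab X i j" unfolding net_cherry_def using c ij(3) by blast
qed

end

theorem mainTheorem3:
  fixes V :: "'v set" and A :: "('v \<times> 'v) set" and lab :: "'v \<Rightarrow> nat"
    and X :: "nat set" and n i j :: nat
  assumes "phylo_net V A lab X n"
    and "i \<in> {1..n}" and "j \<in> {1..n}" and "i \<noteq> j"
  shows "net_cherry V A lab X i j \<longleftrightarrow> mset_cherry n (mu_rep V A lab X n) i j"
  using main_ctx[OF assms] .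

end
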